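(* Consider a finite Markov chain on a set $Q$ of states with $|Q|=n$. Let $x$ denote the smallest nonzero transition probability of the chain. Let $p\in Q$ and $S\subseteq Q$. For runs starting in $p$, define $T=k$ if the run hits a state of $S$ for the first time after exactly $k$ steps, and let $T$ be undefined if the run never hits $S$. Then $\mathcal{P}(T\ge k)\le 2c^k$ for all $k\ge n$, where $c:=\exp(-x^n/n)$.
   Context: $\mathcal{P}(T\ge k)$ denotes the probability of the set of runs from $p$ for which $T$ is defined and $T\ge k$. *)

theory Defs
  imports Complex_Main
begin

text \<open>A finite Markov chain on the finite state type 'q (so n = CARD('q)),
given by its transition matrix P (nonnegative entries, rows summing to 1).\<close>

definition stochastic :: "('q::finite \<Rightarrow> 'q \<Rightarrow> real) \<Rightarrow> bool" where
  "stochastic P \<longleftrightarrow> (\<forall>a b. 0 \<le> P a b) \<and> (\<forall>a. (\<Sum>b\<in>UNIV. P a b) = 1)"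

definition min_trans :: "('q::finite \<Rightarrow> 'q \<Rightarrow> real) \<Rightarrow> real" where
  "min_trans P = Min {P a b | a b. P a b \<noteq> 0}"

text \<open>Probability that a run from p hits S for the first time after exactly j steps
 (step 0 included): sum over finite path prefixes p = w_0, ..., w_j with
 w_i \<notin> S for i < j and w_j \<in> S of the product of transition probabilities.\<close>
definition first_hit_prob :: "('q::finite \<Rightarrow> 'q \<Rightarrow> real) \<Rightarrow> 'q \<Rightarrow> 'q set \<Rightarrow> nat \<Rightarrow> real" where
  "first_hit_prob P p S j =
     (\<Sum>w \<in> {w :: 'q list. length w = Suc j \<and> w ! 0 = p \<and> (\<forall>i<j. w ! i \<notin> S) \<and> w ! j \<in> S}.
        \<Prod>i<j. P (w ! i) (w ! Suc i))"

text \<open>P(T \<ge> k): probability of the runs from p for which T is defined and T \<ge> k,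
 i.e. the (countably additive) sum of the disjoint events T = j, j \<ge> k.\<close>
definition hit_tail_prob :: "('q::finite \<Rightarrow> 'q \<Rightarrow> real) \<Rightarrow> 'q \<Rightarrow> 'q set \<Rightarrow> nat \<Rightarrow> real" where
  "hit_tail_prob P p S k = (\<Sum>j. first_hit_prob P p S (j + k))"

end

theory Submission imports Defs begin

fun hh :: "('q::finite \<Rightarrow> 'q \<Rightarrow> real) \<Rightarrow> 'q set \<Rightarrow> nat \<Rightarrow> 'q \<Rightarrow> real" where
  "hh P S 0 a = (if a \<in> S then 1 else 0)"
| "hh P S (Suc j) a = (if a \<in> S then 0 else (\<Sum>b\<in>UNIV. P a b * hh P S j b))"

definition LL :: "'q::finite set \<Rightarrow> nat \<Rightarrow> 'q \<Rightarrow> 'q list set" where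
  "LL S j a = {w :: 'q list. length w = Suc j \<and> w ! 0 = a \<and> (\<forall>i<j. w ! i \<notin> S) \<and> w ! j \<in> S}"

lemma LL_finite: "finite (LL S j a)"
proof -
  have "LL S j a \<subseteq> {xs. set xs \<subseteq> UNIV \<and> length xs = Suc j}" unfolding LL_def by auto
  moreover have "finite {xs. set xs \<subseteq> (UNIV::'a set) \<and> length xs = Suc j}"
    by (rule finite_lists_length_eq) simp
  ultimately show ?thesis by (rule finite_subset)
qed

lemma LL_Suc: "a \<notin> S \<Longrightarrow> LL S (Suc j) a = Cons a ` (\<Union>b. LL S j b)"
proof (rule set_eqI, rule iffI)
  fix w assume a: "a \<notin> S" and w: "w \<in> LL S (Suc j) a"
  then obtain w' where ww: "w = a # w'" unfolding LL_def by (cases w) auto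
  have "w' \<in> LL S j (w' ! 0)" using w unfolding LL_def ww
    by auto
  then show "w \<in> Cons a ` (\<Union>b. LL S j b)" using ww by blast
next
  fix w assume a: "a \<notin> S" and w: "w \<in> Cons a ` (\<Union>b. LL S j b)"
  then obtain w' b where ww: "w = a # w'" and w': "w' \<in> LL S j b" by blast
  show "w \<in> LL S (Suc j) a" using w' a unfolding ww LL_def
    by (auto simp: less_Suc_eq_0_disj)
qed

lemma first_hit_hh:
  fixes P :: "'q::finite \<Rightarrow> 'q \<Rightarrow> real"
  shows "first_hit_prob P a S j = hh P S j a"
proof (induction j arbitrary: a)
  case 0
  have "{w :: 'q list. length w = Suc 0 \<and> w ! 0 = a \<and> (\<forall>i<0. w ! i \<notin> S) \<and> w ! 0 \<in> S}
        = (if a \<in> S then {[a]} else {})"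
    by (auto simp: length_Suc_conv)
  then show ?case unfolding first_hit_prob_def by simp
next
  case (Suc j)
  have fh: "first_hit_prob P a S j' = (\<Sum>w\<in>LL S j' a. \<Prod>i<j'. P (w ! i) (w ! Suc i))" for a j'
    unfolding first_hit_prob_def LL_def by simp
  show ?case
  proof (cases "a \<in> S")
    case True
    have "LL S (Suc j) a = {}" using True unfolding LL_def by auto
    then show ?thesis using True by (simp add: fh)
  next
    case False
    let ?f = "\<lambda>w. \<Prod>i<Suc j. P (w ! i) (w ! Suc i)"
    have "first_hit_prob P a S (Suc j) = (\<Sum>w\<in>Cons a ` (\<Union>b. LL S j b). ?f w)"
      by (simp add: fh LL_Suc[OF False])
    also have "\<dots> = (\<Sum>w\<in>(\<Union>b. LL S j b). ?f (a # w))"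
      by (subst sum.reindex) (auto simp: inj_on_def)
    also have "\<dots> = (\<Sum>b\<in>UNIV. \<Sum>w\<in>LL S j b. ?f (a # w))"
      by (rule sum.UNION_disjoint) (auto simp: LL_finite, auto simp: LL_def)
    also have "\<dots> = (\<Sum>b\<in>UNIV. \<Sum>w\<in>LL S j b. P a b * (\<Prod>i<j. P (w ! i) (w ! Suc i)))"
      by (rule sum.cong[OF refl], rule sum.cong[OF refl])
         (subst prod.lessThan_Suc_shift, auto simp: LL_def)
    also have "\<dots> = (\<Sum>b\<in>UNIV. P a b * hh P S j b)"
      by (simp add: sum_distrib_left fh Suc.IH[symmetric])
    finally show ?thesis using False by simp
  qed
qed

lemma hh_nonneg: "stochastic P \<Longrightarrow> 0 \<le> hh P S j a"
  by (induction j arbitrary: a) (auto simp: stochastic_def intro!: sum_nonneg)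

definition good :: "('q::finite \<Rightarrow> 'q \<Rightarrow> real) \<Rightarrow> 'q set \<Rightarrow> 'q \<Rightarrow> bool" where
  "good P S a \<longleftrightarrow> (\<exists>j. hh P S j a > 0)"

lemma not_good_hh:
  assumes st: "stochastic P" and ng: "\<not> good P S a" shows "hh P S j a = 0"
proof -
  have "0 \<le> hh P S j a" using hh_nonneg[OF st] .
  moreover have "\<not> hh P S j a > 0" using ng unfolding good_def by blast
  ultimately show ?thesis by simp
qed

fun vv :: "('q::finite \<Rightarrow> 'q \<Rightarrow> real) \<Rightarrow> 'q set \<Rightarrow> nat \<Rightarrow> 'q \<Rightarrow> real" where
  "vv P S 0 a = (if good P S a then 1 else 0)"
| "vv P S (Suc m) a = (if a \<in> S \<or> \<not> good P S a then 0 else (\<Sum>b\<in>UNIV. P a b * vv P S m b))"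

lemma vv_nonneg: "stochastic P \<Longrightarrow> 0 \<le> vv P S j a"
  by (induction j arbitrary: a) (auto simp: stochastic_def intro!: sum_nonneg)

lemma not_good_vv: "\<not> good P S a \<Longrightarrow> vv P S m a = 0"
  by (cases m) auto

lemma hh_partial_le1:
  assumes st: "stochastic P"
  shows "(\<Sum>j<N. hh P S j a) \<le> 1"
proof (induction N arbitrary: a)
  case 0 then show ?case by simp
next
  case (Suc N)
  show ?case
  proof (cases "a \<in> S")
    case True then show ?thesis by (simp add: sum.lessThan_Suc_shift del: sum.lessThan_Suc)
  next
    case False
    have "(\<Sum>j<Suc N. hh P S j a) = (\<Sum>j<N. \<Sum>b\<in>UNIV. P a b * hh P S j b)"
      using False by (simp add: sum.lessThan_Suc_shift del: sum.lessThan_Suc)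
    also have "\<dots> = (\<Sum>b\<in>UNIV. P a b * (\<Sum>j<N. hh P S j b))"
      by (simp add: sum_distrib_left sum.swap[of _ "{..<N}"])
    also have "\<dots> \<le> (\<Sum>b\<in>UNIV. P a b * 1)"
      using st Suc.IH by (intro sum_mono mult_left_mono) (auto simp: stochastic_def)
    also have "\<dots> = 1" using st by (simp add: stochastic_def)
    finally show ?thesis .
  qed
qed

lemma hh_partial_vv:
  assumes st: "stochastic P"
  shows "(\<Sum>j<N. hh P S (j + k) a) \<le> vv P S k a"
proof (induction k arbitrary: a)
  case 0
  show ?case
  proof (cases "good P S a")
    case True then show ?thesis using hh_partial_le1[OF st] by simp
  next
    case False then show ?thesis using not_good_hh[OF st False] by simp
  qed
next
  case (Suc k)
  show ?case
  proof (cases "a \<in> S \<or> \<not> good P S a")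
    case True
    have "hh P S (j + Suc k) a = 0" for j
      using True not_good_hh[OF st, of S a "j + Suc k"] by auto
    then show ?thesis using True by auto
  next
    case False
    have "(\<Sum>j<N. hh P S (j + Suc k) a) = (\<Sum>j<N. \<Sum>b\<in>UNIV. P a b * hh P S (j + k) b)"
      using False by simp
    also have "\<dots> = (\<Sum>b\<in>UNIV. P a b * (\<Sum>j<N. hh P S (j + k) b))"
      by (simp add: sum_distrib_left sum.swap[of _ "{..<N}"])
    also have "\<dots> \<le> (\<Sum>b\<in>UNIV. P a b * vv P S k b)"
      using st Suc.IH by (intro sum_mono mult_left_mono) (auto simp: stochastic_def)
    also have "\<dots> = vv P S (Suc k) a" using False by simp
    finally show ?thesis .
  qed
qed

lemma vv_mult:
  assumes st: "stochastic P" and B: "\<And>b. vv P S m b \<le> B"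
  shows "vv P S (i + m) a \<le> vv P S i a * B"
proof (induction i arbitrary: a)
  case 0
  then show ?case using B[of a] by (cases "good P S a") (auto simp: not_good_vv)
next
  case (Suc i)
  show ?case
  proof (cases "a \<in> S \<or> \<not> good P S a")
    case True then show ?thesis by auto
  next
    case False
    have "vv P S (Suc i + m) a = (\<Sum>b\<in>UNIV. P a b * vv P S (i + m) b)" using False by simp
    also have "\<dots> \<le> (\<Sum>b\<in>UNIV. P a b * (vv P S i b * B))"
      using st Suc.IH by (intro sum_mono mult_left_mono) (auto simp: stochastic_def)
    also have "\<dots> = vv P S (Suc i) a * B" using False by (simp add: sum_distrib_right mult.assoc)
    finally show ?thesis .
  qed
qed

lemma vv_le1: "stochastic P \<Longrightarrow> vv P S m a \<le> 1"
proof (induction m arbitrary: a)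
  case 0 then show ?case by simp
next
  case (Suc m)
  have "(\<Sum>b\<in>UNIV. P a b * vv P S m b) \<le> (\<Sum>b\<in>UNIV. P a b * 1)"
    using Suc by (intro sum_mono mult_left_mono) (auto simp: stochastic_def)
  also have "\<dots> = 1" using Suc.prems by (simp add: stochastic_def)
  finally show ?case by simp
qed

lemma vv_mono:
  assumes st: "stochastic P" and "j \<le> k"
  shows "vv P S k a \<le> vv P S j a"
proof -
  have *: "vv P S (Suc m) a \<le> vv P S m a" for m
    using vv_mult[where i=m and m=1 and a=a and B=1, OF st vv_le1[OF st]] by simp
  show ?thesis using assms(2)
  proof (induction k rule: dec_induct)
    case base then show ?case by simp
  next
    case (step n) then show ?case using *[of n] by linarith
  qed
qed

lemma vv_hh_le1:
  assumes st: "stochastic P"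
  shows "vv P S m a + (\<Sum>j<m. hh P S j a) \<le> 1"
proof (induction m arbitrary: a)
  case 0 then show ?case by simp
next
  case (Suc m)
  show ?case
  proof (cases "a \<in> S")
    case True then show ?thesis by (simp add: sum.lessThan_Suc_shift del: sum.lessThan_Suc)
  next
    case F: False
    show ?thesis
    proof (cases "good P S a")
      case False
      then show ?thesis using not_good_hh[OF st False] by simp
    next
      case True
      have "vv P S (Suc m) a + (\<Sum>j<Suc m. hh P S j a)
          = (\<Sum>b\<in>UNIV. P a b * vv P S m b) + (\<Sum>j<m. \<Sum>b\<in>UNIV. P a b * hh P S j b)"
        using F True by (simp add: sum.lessThan_Suc_shift del: sum.lessThan_Suc)
      also have "\<dots> = (\<Sum>b\<in>UNIV. P a b * (vv P S m b + (\<Sum>j<m. hh P S j b)))"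
        by (simp add: sum_distrib_left sum.swap[of _ "{..<m}"] distrib_left sum.distrib)
      also have "\<dots> \<le> (\<Sum>b\<in>UNIV. P a b * 1)"
        using st Suc.IH by (intro sum_mono mult_left_mono) (auto simp: stochastic_def)
      also have "\<dots> = 1" using st by (simp add: stochastic_def)
      finally show ?thesis .
    qed
  qed
qed


lemma min_trans_props:
  fixes P :: "'q::finite \<Rightarrow> 'q \<Rightarrow> real"
  assumes st: "stochastic P"
  shows "0 < min_trans P" "min_trans P \<le> 1" "\<And>a b. 0 < P a b \<Longrightarrow> min_trans P \<le> P a b"
proof -
  let ?M = "{P a b | a b. P a b \<noteq> 0}"
  have fin: "finite ?M"
  proof -
    have "?M \<subseteq> (\<lambda>(a, b). P a b) ` UNIV" by auto
    then show ?thesis by (rule finite_subset) simp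
  qed
  obtain a0 :: 'q where True by simp
  have "(\<Sum>b\<in>UNIV. P a0 b) = 1" using st by (simp add: stochastic_def)
  then obtain b0 where "P a0 b0 \<noteq> 0" by (metis (mono_tags, lifting) sum.neutral zero_neq_one)
  then have ne: "?M \<noteq> {}" by blast
  have "Min ?M \<in> ?M" using fin ne by (rule Min_in)
  then obtain a b where ab: "min_trans P = P a b" "P a b \<noteq> 0" unfolding min_trans_def by blast
  have le1: "P c d \<le> 1" for c d
  proof -
    have "P c d \<le> (\<Sum>b\<in>UNIV. P c b)"
      using st by (intro member_le_sum) (auto simp: stochastic_def)
    then show ?thesis using st by (simp add: stochastic_def)
  qed
  show "0 < min_trans P" using ab st by (simp add: stochastic_def less_le)
  show "min_trans P \<le> 1" using ab le1 by simp
  show "min_trans P \<le> P c d" if "0 < P c d" for c d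
    unfolding min_trans_def using fin that by (intro Min_le; force)
qed

fun RR :: "('q::finite \<Rightarrow> 'q \<Rightarrow> real) \<Rightarrow> 'q set \<Rightarrow> nat \<Rightarrow> 'q set" where
  "RR P S 0 = S"
| "RR P S (Suc j) = S \<union> {a. \<exists>b\<in>RR P S j. P a b > 0}"

lemma hh_pos_RR:
  assumes st: "stochastic P"
  shows "hh P S j a > 0 \<Longrightarrow> a \<in> RR P S j"
proof (induction j arbitrary: a)
  case 0 then show ?case by (auto split: if_splits)
next
  case (Suc j)
  show ?case
  proof (cases "a \<in> S")
    case True then show ?thesis by simp
  next
    case False
    then have "(\<Sum>b\<in>UNIV. P a b * hh P S j b) > 0" using Suc.prems by simp
    then obtain b where "P a b * hh P S j b > 0"
      by (metis (no_types, lifting) not_le sum_nonpos)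
    moreover have "0 \<le> P a b" "0 \<le> hh P S j b" using st hh_nonneg[OF st] by (auto simp: stochastic_def)
    ultimately have "P a b > 0" "hh P S j b > 0" by (auto simp: zero_less_mult_iff)
    then show ?thesis using Suc.IH by auto
  qed
qed

lemma RR_hh:
  fixes P :: "'q::finite \<Rightarrow> 'q \<Rightarrow> real"
  assumes st: "stochastic P"
  shows "a \<in> RR P S j \<Longrightarrow> \<exists>j'\<le>j. hh P S j' a \<ge> min_trans P ^ j'"
proof (induction j arbitrary: a)
  case 0 then show ?case by auto
next
  case (Suc j)
  show ?case
  proof (cases "a \<in> S")
    case True then show ?thesis by (intro exI[of _ 0]) simp
  next
    case False
    then obtain b where b: "b \<in> RR P S j" "P a b > 0" using Suc.prems by auto
    obtain j' where j': "j' \<le> j" "hh P S j' b \<ge> min_trans P ^ j'" using Suc.IH[OF b(1)] by blast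
    have "min_trans P ^ Suc j' = min_trans P * min_trans P ^ j'" by simp
    also have "\<dots> \<le> P a b * hh P S j' b"
      using min_trans_props[OF st] b j' by (intro mult_mono) auto
    also have "\<dots> \<le> (\<Sum>c\<in>UNIV. P a c * hh P S j' c)"
      using st hh_nonneg[OF st] by (intro member_le_sum) (auto simp: stochastic_def)
    also have "\<dots> = hh P S (Suc j') a" using False by simp
    finally show ?thesis using j' by (intro exI[of _ "Suc j'"]) auto
  qed
qed

lemma RR_Suc_mono: "RR P S j \<subseteq> RR P S (Suc j)"
  by (induction j) auto

lemma RR_mono: "j \<le> k \<Longrightarrow> RR P S j \<subseteq> RR P S k"
  by (induction k rule: dec_induct) (use RR_Suc_mono in blast)+

lemma RR_stab: "RR P S j = RR P S (Suc j) \<or> j + 1 \<le> card (RR P S j)"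
proof (induction j)
  case 0
  show ?case
  proof (cases "S = {}")
    case True then show ?thesis by simp
  next
    case False then show ?thesis by (simp add: Suc_le_eq card_gt_0_iff)
  qed
next
  case (Suc j)
  show ?case
  proof (cases "RR P S (Suc j) = RR P S (Suc (Suc j))")
    case True then show ?thesis by blast
  next
    case False
    have "RR P S j \<noteq> RR P S (Suc j)"
    proof
      assume eq: "RR P S j = RR P S (Suc j)"
      have "RR P S (Suc (Suc j)) = S \<union> {a. \<exists>b\<in>RR P S (Suc j). P a b > 0}" by simp
      also have "\<dots> = RR P S (Suc j)" by (subst eq[symmetric]) simp
      finally show False using False by simp
    qed
    then have "RR P S j \<subset> RR P S (Suc j)" using RR_Suc_mono by blast
    then have lt: "card (RR P S j) < card (RR P S (Suc j))" by (rule psubset_card_mono[rotated]) simp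
    have "j + 1 \<le> card (RR P S j)" using Suc.IH \<open>RR P S j \<noteq> RR P S (Suc j)\<close> by blast
    then show ?thesis using lt by linarith
  qed
qed

lemma RR_bound:
  fixes P :: "'q::finite \<Rightarrow> 'q \<Rightarrow> real"
  shows "RR P S m \<subseteq> RR P S ((card (UNIV::'q set)) - 1)"
proof -
  let ?n = "(card (UNIV::'q set))"
  have n1: "?n \<ge> 1" using card_gt_0_iff[of "UNIV::'q set"] by simp
  from RR_stab[of P S "?n - 1"] show ?thesis
  proof
    assume eq: "RR P S (?n - 1) = RR P S (Suc (?n - 1))"
    show ?thesis
    proof (induction m)
      case 0 then show ?case using RR_mono[of 0 "?n - 1" P S] by simp
    next
      case (Suc m)
      have "RR P S (Suc m) \<subseteq> S \<union> {a. \<exists>b\<in>RR P S (?n - 1). P a b > 0}"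
        using Suc.IH by auto
      also have "\<dots> = RR P S (Suc (?n - 1))" by simp
      finally have "RR P S (Suc m) \<subseteq> RR P S (Suc (?n - 1))" .
      then show ?case using eq by (simp only:)
    qed
  next
    assume "?n - 1 + 1 \<le> card (RR P S (?n - 1))"
    then have "card (RR P S (?n - 1)) = card (UNIV :: 'q set)"
      using n1 card_mono[of UNIV "RR P S (?n - 1)"] by simp
    then have "RR P S (?n - 1) = UNIV" by (simp add: card_subset_eq)
    then show ?thesis by simp
  qed
qed

lemma good_sum:
  fixes P :: "'q::finite \<Rightarrow> 'q \<Rightarrow> real"
  assumes st: "stochastic P" and g: "good P S a"
  shows "min_trans P ^ (card (UNIV::'q set)) \<le> (\<Sum>j<(card (UNIV::'q set)). hh P S j a)"
proof -
  let ?n = "(card (UNIV::'q set))" and ?x = "min_trans P"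
  obtain j where "hh P S j a > 0" using g unfolding good_def by blast
  then have "a \<in> RR P S (?n - 1)" using hh_pos_RR[OF st] RR_bound by blast
  then obtain j' where j': "j' \<le> ?n - 1" "hh P S j' a \<ge> ?x ^ j'" using RR_hh[OF st] by blast
  have n1: "?n \<ge> 1" using card_gt_0_iff[of "UNIV::'q set"] by simp
  have "?x ^ ?n \<le> ?x ^ j'"
    using min_trans_props[OF st] j'(1) n1 by (intro power_decreasing) auto
  also have "\<dots> \<le> hh P S j' a" by (rule j'(2))
  also have "\<dots> \<le> (\<Sum>j<?n. hh P S j a)"
    using j'(1) n1 hh_nonneg[OF st] by (intro member_le_sum) auto
  finally show ?thesis .
qed

lemma vv_n:
  fixes P :: "'q::finite \<Rightarrow> 'q \<Rightarrow> real"
  assumes st: "stochastic P"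
  shows "vv P S (card (UNIV::'q set)) a \<le> 1 - min_trans P ^ (card (UNIV::'q set))"
proof (cases "good P S a")
  case True
  then show ?thesis using vv_hh_le1[OF st, of S "(card (UNIV::'q set))" a] good_sum[OF st True] by linarith
next
  case False
  have "min_trans P ^ (card (UNIV::'q set)) \<le> 1"
    using min_trans_props[OF st] by (intro power_le_one) auto
  then show ?thesis using not_good_vv[OF False] by simp
qed

lemma vv_blocks:
  fixes P :: "'q::finite \<Rightarrow> 'q \<Rightarrow> real"
  assumes st: "stochastic P"
  shows "vv P S (i * (card (UNIV::'q set))) a \<le> (1 - min_trans P ^ (card (UNIV::'q set))) ^ i"
proof (induction i arbitrary: a)
  case 0 then show ?case using vv_le1[OF st] by simp
next
  case (Suc i)
  let ?z = "1 - min_trans P ^ (card (UNIV::'q set))"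
  have z0: "0 \<le> ?z"
    using min_trans_props[OF st] by (simp add: power_le_one)
  have "vv P S (Suc i * (card (UNIV::'q set))) a = vv P S ((card (UNIV::'q set)) + i * (card (UNIV::'q set))) a" by simp
  also have "\<dots> \<le> vv P S (card (UNIV::'q set)) a * ?z ^ i"
    by (rule vv_mult[OF st Suc.IH])
  also have "\<dots> \<le> ?z * ?z ^ i"
    using vv_n[OF st] z0 by (intro mult_right_mono) auto
  finally show ?case by simp
qed

lemma exp_aux: "0 \<le> (u::real) \<Longrightarrow> u \<le> 1 \<Longrightarrow> exp u * (1 - u) \<le> 1"
proof -
  assume "0 \<le> u" "u \<le> 1"
  have "1 - u \<le> exp (- u)" using exp_ge_add_one_self[of "-u"] by simp
  then have "exp u * (1 - u) \<le> exp u * exp (-u)" by (intro mult_left_mono) auto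
  then show ?thesis by (simp add: exp_minus)
qed

lemma exp_half_le2: "exp (1/2::real) \<le> 2"
proof (rule ccontr)
  assume "\<not> exp (1/2::real) \<le> 2"
  then have g: "exp (1/2::real) > 2" by simp
  have "exp (1/2::real) * exp (1/2) = exp (1/2 + 1/2)" by (rule exp_add[symmetric])
  also have "(1/2 + 1/2::real) = 1" by simp
  finally have "exp (1/2::real) * exp (1/2) = exp 1" .
  moreover have "exp (1/2::real) * exp (1/2) > 2 * 2" using g by (intro mult_strict_mono) auto
  ultimately show False using exp_le by linarith
qed

lemma key_ineq: "0 \<le> (z::real) \<Longrightarrow> z \<le> 1 \<Longrightarrow> 1 - z \<le> 2 * exp (- 2 * z)"
proof -
  assume z: "0 \<le> z" "z \<le> 1"
  have main: "(1 - z) * exp (2 * z) \<le> 2"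
  proof (cases "z \<le> 1/2")
    case True
    have "exp (2 * z) = exp (z + z)" by (simp only: mult_2)
    also have "\<dots> = exp z * exp z" by (rule exp_add)
    finally have "exp (2 * z) = exp z * exp z" .
    then have "(1 - z) * exp (2 * z) = exp z * (exp z * (1 - z))" by simp
    also have "\<dots> \<le> exp z * 1"
      using exp_aux[of z] z by (intro mult_left_mono) auto
    also have "\<dots> \<le> exp (1/2)" using True by simp
    also have "\<dots> \<le> 2" by (rule exp_half_le2)
    finally show ?thesis .
  next
    case False
    have "exp (2 * z) = exp (1 + (2 * z - 1))" by simp
    also have "\<dots> = exp 1 * exp (2 * z - 1)" by (rule exp_add)
    finally have "exp (2 * z) = exp 1 * exp (2 * z - 1)" .
    then have "(1 - z) * exp (2 * z) = exp 1 / 2 * (exp (2 * z - 1) * (1 - (2 * z - 1)))"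
      by (simp add: algebra_simps)
    also have "\<dots> \<le> exp 1 / 2 * 1"
      using exp_aux[of "2 * z - 1"] z False by (intro mult_left_mono) auto
    also have "\<dots> \<le> 2" using exp_le by linarith
    finally show ?thesis .
  qed
  have "exp (- 2 * z) = inverse (exp (2 * z))" by (simp add: exp_minus[symmetric])
  then have e: "2 * exp (- 2 * z) = 2 / exp (2 * z)" by (simp add: divide_inverse)
  show ?thesis unfolding e using main by (simp add: pos_le_divide_eq)
qed


lemma final_ineq:
  fixes z :: real and m n k :: nat
  assumes z: "0 \<le> z" "z \<le> 1" and m: "m \<ge> 1" and n: "n \<ge> 1" and k: "k < (m + 1) * n"
  shows "(1 - z) ^ m \<le> 2 * exp (- z / real n) ^ k"
proof -
  have e1: "1 - z \<le> exp (- z)" using exp_ge_add_one_self[of "-z"] by simp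
  have "(1 - z) ^ m = (1 - z) * (1 - z) ^ (m - 1)"
    using m by (metis Suc_diff_le diff_Suc_1 power_Suc)
  also have "\<dots> \<le> (2 * exp (- 2 * z)) * exp (- z) ^ (m - 1)"
    using key_ineq[OF z] e1 z by (intro mult_mono power_mono) auto
  also have "exp (- z) ^ (m - 1) = exp (real (m - 1) * (- z))" by (rule exp_of_nat_mult[symmetric])
  also have "2 * exp (- 2 * z) * exp (real (m - 1) * (- z)) = 2 * exp (- 2 * z + real (m - 1) * (- z))"
    by (simp only: exp_add mult.assoc)
  also have "- 2 * z + real (m - 1) * (- z) = - (real m + 1) * z"
    using m by (simp add: of_nat_diff algebra_simps)
  also have "exp (- (real m + 1) * z) \<le> exp (real k * (- z / real n))"
  proof -
    have "real k < (real m + 1) * real n" using k by (metis of_nat_add of_nat_1 of_nat_less_iff of_nat_mult)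
    then have "real k / real n \<le> real m + 1" using n by (simp add: divide_le_eq)
    then have "real k / real n * z \<le> (real m + 1) * z" using z by (intro mult_right_mono) auto
    then have "- (real m + 1) * z \<le> real k * (- z / real n)" by (simp add: algebra_simps)
    then show ?thesis by simp
  qed
  also have "exp (real k * (- z / real n)) = exp (- z / real n) ^ k" by (rule exp_of_nat_mult)
  finally show ?thesis by simp
qed

theorem mainTheorem3:
  fixes P :: "'q::finite \<Rightarrow> 'q \<Rightarrow> real" and p :: 'q and S :: "'q set" and k :: nat
  assumes "stochastic P"
    and "k \<ge> card (UNIV :: 'q set)"
  shows "hit_tail_prob P p S k
           \<le> 2 * (exp (- ((min_trans P) ^ (card (UNIV :: 'q set))) / real (card (UNIV :: 'q set)))) ^ k"
proof -
  note st = assms(1)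
  let ?n = "card (UNIV :: 'q set)"
  let ?z = "min_trans P ^ ?n"
  have n1: "?n \<ge> 1" using card_gt_0_iff[of "UNIV::'q set"] by simp
  have z0: "0 \<le> ?z" using min_trans_props[OF st] by simp
  have z1: "?z \<le> 1" using min_trans_props[OF st] by (intro power_le_one) auto
  have tail: "hit_tail_prob P p S k = (\<Sum>j. hh P S (j + k) p)"
    unfolding hit_tail_prob_def first_hit_hh ..
  have "(\<Sum>j. hh P S (j + k) p) \<le> vv P S k p"
  proof (rule suminf_le_const)
    show "summable (\<lambda>j. hh P S (j + k) p)"
      by (rule summableI_nonneg_bounded[OF hh_nonneg[OF st] hh_partial_vv[OF st]])
    show "\<And>N. (\<Sum>j<N. hh P S (j + k) p) \<le> vv P S k p" by (rule hh_partial_vv[OF st])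
  qed
  define m where "m = k div ?n"
  have m1: "m \<ge> 1" using assms(2) n1 unfolding m_def by (simp add: div_le_mono[of ?n k ?n, simplified] n1)
  have mk: "m * ?n \<le> k" unfolding m_def by (rule div_times_less_eq_dividend)
  have km: "k < (m + 1) * ?n" unfolding m_def using n1
    by (metis add.commute div_mult_mod_eq mod_less_divisor mult_Suc nat_add_left_cancel_less
        Suc_eq_plus1 less_le_trans le_refl zero_less_one)
  have "vv P S k p \<le> vv P S (m * ?n) p" by (rule vv_mono[OF st mk])
  also have "\<dots> \<le> (1 - ?z) ^ m" by (rule vv_blocks[OF st])
  also have "\<dots> \<le> 2 * exp (- ?z / real ?n) ^ k" by (rule final_ineq[OF z0 z1 m1 n1 km])
  finally show ?thesis using tail \<open>(\<Sum>j. hh P S (j + k) p) \<le> vv P S k p\<close> by simp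
qed

end
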